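(* Let $(\mathcal S,\mathcal A,P,r)$ be any finite MDP (general/multichain) and $(g^\star,h^\star)$ a solution of the modified Bellman equations. Let $V^0\in\mathbb R^n$, $0\le\lambda_k<1$ for $k\ge1$, and $V^k=\lambda_kV^{k-1}+(1-\lambda_k)TV^{k-1}$ for $k\ge1$ (Relaxed Value Iteration). Then for every $k\ge1$, \[\Big\|\frac{V^k-V^0}{\sum_{i=1}^k(1-\lambda_i)}-g^\star\Big\|_\infty\le\frac{2\big(1-\prod_{i=1}^k\lambda_i\big)}{\sum_{i=1}^k(1-\lambda_i)}\|V^0-h^\star\|_\infty.\]
   Context: An MDP $(\mathcal S,\mathcal A,P,r)$ has finite state space $\mathcal S$ ($|\mathcal S|=n$, functions identified with $\mathbb R^n$), finite action space, transition probabilities $P(s'\mid s,a)$ and bounded reward $r$. The Bellman optimality operator is $(TV)(s)=\max_a\{r(s,a)+\sum_{s'}P(s'\mid s,a)V(s')\}$. $g^\star(s)=\max_\pi\liminf_{T\to\infty}\frac1T\mathbb E_\pi[\sum_{t=0}^{T-1}r(s_t,a_t)\mid s_0=s]$ is the optimal average reward. A pair $(g,h)$ solves the modified Bellman equations if $\max_a\sum_{s'}P(s'\mid s,a)g(s')=g(s)$ and $\max_a\{r(s,a)+\sum_{s'}P(s'\mid s,a)h(s')\}=h(s)+g(s)$ for all $s$, with some policy attaining both maxima simultaneously; the first component of any solution equals $g^\star$. *)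

theory Defs
  imports "HOL-Analysis.Analysis"
begin

definition is_mdp :: "('s::finite \<Rightarrow> 'a::finite \<Rightarrow> 's \<Rightarrow> real) \<Rightarrow> bool" where
  "is_mdp P \<longleftrightarrow> (\<forall>s a s'. 0 \<le> P s a s') \<and> (\<forall>s a. (\<Sum>s'\<in>UNIV. P s a s') = 1)"

definition bellman ::
  "('s::finite \<Rightarrow> 'a::finite \<Rightarrow> 's \<Rightarrow> real) \<Rightarrow> ('s \<Rightarrow> 'a \<Rightarrow> real) \<Rightarrow> ('s \<Rightarrow> real) \<Rightarrow> 's \<Rightarrow> real" where
  "bellman P r V s = Max (range (\<lambda>a. r s a + (\<Sum>s'\<in>UNIV. P s a s' * V s')))"

definition modified_bellman_solution ::
  "('s::finite \<Rightarrow> 'a::finite \<Rightarrow> 's \<Rightarrow> real) \<Rightarrow> ('s \<Rightarrow> 'a \<Rightarrow> real) \<Rightarrow> ('s \<Rightarrow> real) \<Rightarrow> ('s \<Rightarrow> real) \<Rightarrow> bool" where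
  "modified_bellman_solution P r g h \<longleftrightarrow>
     (\<forall>s. Max (range (\<lambda>a. \<Sum>s'\<in>UNIV. P s a s' * g s')) = g s) \<and>
     (\<forall>s. Max (range (\<lambda>a. r s a + (\<Sum>s'\<in>UNIV. P s a s' * h s'))) = h s + g s) \<and>
     (\<exists>\<pi>::'s \<Rightarrow> 'a. \<forall>s. (\<Sum>s'\<in>UNIV. P s (\<pi> s) s' * g s') = g s \<and>
                        r s (\<pi> s) + (\<Sum>s'\<in>UNIV. P s (\<pi> s) s' * h s') = h s + g s)"

definition sup_norm :: "('s::finite \<Rightarrow> real) \<Rightarrow> real" where
  "sup_norm f = Max (range (\<lambda>s. \<bar>f s\<bar>))"

end

theory Submission
  imports Defs
begin

lemma sup_norm_ge: "\<bar>f s\<bar> \<le> sup_norm (f::'s::finite \<Rightarrow> real)"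
  unfolding sup_norm_def by (rule Max_ge) auto

lemma sup_norm_le: "(\<And>s. \<bar>f s\<bar> \<le> c) \<Longrightarrow> sup_norm (f::'s::finite \<Rightarrow> real) \<le> c"
  unfolding sup_norm_def by (subst Max_le_iff) auto

lemma conv_abs:
  fixes a b x y :: real
  assumes "0 \<le> a" "0 \<le> b"
  shows "\<bar>a * x + b * y\<bar> \<le> a * \<bar>x\<bar> + b * \<bar>y\<bar>"
proof -
  have "\<bar>a * x + b * y\<bar> \<le> \<bar>a * x\<bar> + \<bar>b * y\<bar>" by (rule abs_triangle_ineq)
  also have "\<dots> = a * \<bar>x\<bar> + b * \<bar>y\<bar>" using assms by (simp add: abs_mult)
  finally show ?thesis .
qed

lemma Max_range_mono:
  fixes f g :: "'a::finite \<Rightarrow> real"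
  assumes "\<And>a. f a \<le> g a + c"
  shows "Max (range f) \<le> Max (range g) + c"
proof -
  have "Max (range f) \<in> range f" by (rule Max_in) auto
  then obtain a where a: "Max (range f) = f a" by blast
  have "g a \<le> Max (range g)" by (rule Max_ge) auto
  with a assms[of a] show ?thesis by linarith
qed

lemma bellman_nonexp:
  assumes mdp: "is_mdp P"
    and d: "\<And>s. \<bar>V s - W s\<bar> \<le> c"
  shows "\<bar>bellman P r V s - bellman P r W s\<bar> \<le> c"
proof -
  have P0: "\<And>s a s'. 0 \<le> P s a s'" and P1: "\<And>s a. (\<Sum>s'\<in>UNIV. P s a s') = 1"
    using mdp unfolding is_mdp_def by auto
  have key: "(\<Sum>s'\<in>UNIV. P s a s' * X s') \<le> (\<Sum>s'\<in>UNIV. P s a s' * Y s') + c"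
    if "\<And>s. \<bar>X s - Y s\<bar> \<le> c" for a and X Y :: "_ \<Rightarrow> real"
  proof -
    have "(\<Sum>s'\<in>UNIV. P s a s' * X s') \<le> (\<Sum>s'\<in>UNIV. P s a s' * (Y s' + c))"
    proof (rule sum_mono)
      fix s' show "P s a s' * X s' \<le> P s a s' * (Y s' + c)"
        using that[of s'] P0[of s a s'] by (intro mult_left_mono) auto
    qed
    also have "\<dots> = (\<Sum>s'\<in>UNIV. P s a s' * Y s') + c * (\<Sum>s'\<in>UNIV. P s a s')"
      by (simp add: algebra_simps sum.distrib sum_distrib_left)
    finally show ?thesis using P1[of s a] by simp
  qed
  have d2: "\<And>s. \<bar>W s - V s\<bar> \<le> c" using d by (simp add: abs_minus_commute)
  have 1: "bellman P r V s \<le> bellman P r W s + c"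
    unfolding bellman_def by (rule Max_range_mono) (use key[OF d] in auto)
  have 2: "bellman P r W s \<le> bellman P r V s + c"
    unfolding bellman_def by (rule Max_range_mono) (use key[OF d2] in auto)
  from 1 2 show ?thesis by linarith
qed

lemma bellman_hg:
  assumes sol: "modified_bellman_solution P r g h" and c: "0 \<le> c"
  shows "bellman P r (\<lambda>s. h s + c * g s) s = h s + (c + 1) * g s"
proof -
  from sol have A: "\<And>s. Max (range (\<lambda>a. \<Sum>s'\<in>UNIV. P s a s' * g s')) = g s"
    and B: "\<And>s. Max (range (\<lambda>a. r s a + (\<Sum>s'\<in>UNIV. P s a s' * h s'))) = h s + g s"
    and C: "\<exists>\<pi>. \<forall>s. (\<Sum>s'\<in>UNIV. P s (\<pi> s) s' * g s') = g s \<and>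
                        r s (\<pi> s) + (\<Sum>s'\<in>UNIV. P s (\<pi> s) s' * h s') = h s + g s"
    unfolding modified_bellman_solution_def by auto
  from C obtain \<pi> where pi: "\<And>s. (\<Sum>s'\<in>UNIV. P s (\<pi> s) s' * g s') = g s \<and>
                        r s (\<pi> s) + (\<Sum>s'\<in>UNIV. P s (\<pi> s) s' * h s') = h s + g s" by blast
  have split: "\<And>a. r s a + (\<Sum>s'\<in>UNIV. P s a s' * (h s' + c * g s'))
      = (r s a + (\<Sum>s'\<in>UNIV. P s a s' * h s')) + c * (\<Sum>s'\<in>UNIV. P s a s' * g s')"
    by (simp add: algebra_simps sum.distrib sum_distrib_left)
  show ?thesis unfolding bellman_def
  proof (rule Max_eqI)
    show "finite (range (\<lambda>a. r s a + (\<Sum>s'\<in>UNIV. P s a s' * (h s' + c * g s'))))" by simp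
  next
    fix y assume "y \<in> range (\<lambda>a. r s a + (\<Sum>s'\<in>UNIV. P s a s' * (h s' + c * g s')))"
    then obtain a where y: "y = r s a + (\<Sum>s'\<in>UNIV. P s a s' * (h s' + c * g s'))" by auto
    have "r s a + (\<Sum>s'\<in>UNIV. P s a s' * h s') \<le> Max (range (\<lambda>a. r s a + (\<Sum>s'\<in>UNIV. P s a s' * h s')))"
      by (rule Max_ge) auto
    then have "r s a + (\<Sum>s'\<in>UNIV. P s a s' * h s') \<le> h s + g s" using B[of s] by simp
    moreover have "(\<Sum>s'\<in>UNIV. P s a s' * g s') \<le> Max (range (\<lambda>a. \<Sum>s'\<in>UNIV. P s a s' * g s'))"
      by (rule Max_ge) auto
    then have "(\<Sum>s'\<in>UNIV. P s a s' * g s') \<le> g s" using A[of s] by simp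
    ultimately have "(r s a + (\<Sum>s'\<in>UNIV. P s a s' * h s')) + c * (\<Sum>s'\<in>UNIV. P s a s' * g s')
        \<le> (h s + g s) + c * g s"
      using c by (intro add_mono[OF _ mult_left_mono]) auto
    then show "y \<le> h s + (c + 1) * g s"
      unfolding y split by (simp add: algebra_simps)
  next
    show "h s + (c + 1) * g s \<in> range (\<lambda>a. r s a + (\<Sum>s'\<in>UNIV. P s a s' * (h s' + c * g s')))"
      by (rule image_eqI[where x="\<pi> s"]) (use pi[of s] in \<open>simp only: split, simp_all add: algebra_simps\<close>)
  qed
qed

theorem theorem7:
  fixes P :: "'s::finite \<Rightarrow> 'a::finite \<Rightarrow> 's \<Rightarrow> real"
    and r :: "'s \<Rightarrow> 'a \<Rightarrow> real"
    and gstar hstar :: "'s \<Rightarrow> real"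
    and lam :: "nat \<Rightarrow> real"
    and V :: "nat \<Rightarrow> 's \<Rightarrow> real"
    and k :: nat
  assumes mdp: "is_mdp P"
    and sol: "modified_bellman_solution P r gstar hstar"
    and lam: "\<And>i. i \<ge> 1 \<Longrightarrow> 0 \<le> lam i \<and> lam i < 1"
    and iter: "\<And>i. i \<ge> 1 \<Longrightarrow>
                 V i = (\<lambda>s. lam i * V (i - 1) s + (1 - lam i) * bellman P r (V (i - 1)) s)"
    and k: "k \<ge> 1"
  shows "sup_norm (\<lambda>s. (V k s - V 0 s) / (\<Sum>i=1..k. 1 - lam i) - gstar s)
         \<le> 2 * (1 - (\<Prod>i=1..k. lam i)) / (\<Sum>i=1..k. 1 - lam i) * sup_norm (\<lambda>s. V 0 s - hstar s)"
proof -
  define S where "S n = (\<Sum>i=1..n. 1 - lam i)" for n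
  define p where "p n = (\<Prod>i=1..n. lam i)" for n
  define E where "E = sup_norm (\<lambda>s. V 0 s - hstar s)"
  define e where "e n s = V n s - (hstar s + S n * gstar s)" for n s
  have e0: "\<And>s. \<bar>e 0 s\<bar> \<le> E" unfolding e_def S_def E_def using sup_norm_ge by simp
  have S0: "\<And>n. S n \<ge> 0" unfolding S_def using lam by (intro sum_nonneg) (smt (verit) atLeastAtMost_iff)
  have SSuc: "\<And>n. S (Suc n) = S n + (1 - lam (Suc n))" unfolding S_def by simp
  have pSuc: "\<And>n. p (Suc n) = p n * lam (Suc n)" unfolding p_def by simp
  have step: "e (Suc n) s = lam (Suc n) * e n s + (1 - lam (Suc n)) *
      (bellman P r (V n) s - bellman P r (\<lambda>s. hstar s + S n * gstar s) s)" for n s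
  proof -
    have "V (Suc n) s = lam (Suc n) * V n s + (1 - lam (Suc n)) * bellman P r (V n) s"
      using iter[of "Suc n"] by simp
    moreover have "bellman P r (\<lambda>s. hstar s + S n * gstar s) s = hstar s + (S n + 1) * gstar s"
      by (rule bellman_hg[OF sol S0])
    ultimately show ?thesis unfolding e_def SSuc by (simp add: algebra_simps)
  qed
  have c1: "\<And>s. \<bar>e n s\<bar> \<le> E" for n
  proof (induction n)
    case 0 then show ?case using e0 .
  next
    case (Suc n)
    have l: "0 \<le> lam (Suc n)" "lam (Suc n) < 1" using lam[of "Suc n"] by auto
    have b: "\<bar>bellman P r (V n) s - bellman P r (\<lambda>s. hstar s + S n * gstar s) s\<bar> \<le> E" for s
      by (rule bellman_nonexp[OF mdp]) (use Suc in \<open>simp add: e_def\<close>)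
    show ?case
    proof -
      fix s
      have "\<bar>e (Suc n) s\<bar> \<le> lam (Suc n) * \<bar>e n s\<bar> + (1 - lam (Suc n)) *
        \<bar>bellman P r (V n) s - bellman P r (\<lambda>s. hstar s + S n * gstar s) s\<bar>"
        unfolding step using l by (intro conv_abs) auto
      also have "\<dots> \<le> lam (Suc n) * E + (1 - lam (Suc n)) * E"
        using l Suc[of s] b[of s] by (intro add_mono[OF mult_left_mono mult_left_mono]) auto
      finally show "\<bar>e (Suc n) s\<bar> \<le> E" by (simp add: algebra_simps)
    qed
  qed
  have c2: "\<And>s. \<bar>e n s - e 0 s\<bar> \<le> 2 * E * (1 - p n)" for n
  proof (induction n)
    case 0 then show ?case by (simp add: p_def)
  next
    case (Suc n)
    have l: "0 \<le> lam (Suc n)" "lam (Suc n) < 1" using lam[of "Suc n"] by auto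
    have b: "\<bar>bellman P r (V n) s - bellman P r (\<lambda>s. hstar s + S n * gstar s) s\<bar> \<le> E" for s
      by (rule bellman_nonexp[OF mdp]) (use c1 in \<open>simp add: e_def\<close>)
    show ?case
    proof -
      fix s
      have eq: "e (Suc n) s - e 0 s = lam (Suc n) * (e n s - e 0 s) + (1 - lam (Suc n)) *
        ((bellman P r (V n) s - bellman P r (\<lambda>s. hstar s + S n * gstar s) s) - e 0 s)"
        unfolding step by (simp add: algebra_simps)
      have "\<bar>e (Suc n) s - e 0 s\<bar> \<le> lam (Suc n) * \<bar>e n s - e 0 s\<bar> + (1 - lam (Suc n)) *
        \<bar>(bellman P r (V n) s - bellman P r (\<lambda>s. hstar s + S n * gstar s) s) - e 0 s\<bar>"
        unfolding eq using l by (intro conv_abs) auto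
      also have "\<dots> \<le> lam (Suc n) * (2 * E * (1 - p n)) + (1 - lam (Suc n)) * (2 * E)"
        using l Suc[of s] b[of s] e0[of s] by (intro add_mono[OF mult_left_mono mult_left_mono]) auto
      finally show "\<bar>e (Suc n) s - e 0 s\<bar> \<le> 2 * E * (1 - p (Suc n))"
        unfolding pSuc by (simp add: algebra_simps)
    qed
  qed
  have Spos: "S k > 0"
  proof -
    have "S k = S (k - 1) + (1 - lam k)" using SSuc[of "k-1"] k by simp
    with S0[of "k-1"] lam[OF k] show ?thesis by linarith
  qed
  show ?thesis
    unfolding S_def[symmetric] p_def[symmetric] E_def[symmetric]
  proof (rule sup_norm_le)
    fix s
    have "(V k s - V 0 s) / S k - gstar s = (e k s - e 0 s) / S k"
      using Spos unfolding e_def by (simp add: field_simps S_def)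
    also have "\<bar>\<dots>\<bar> = \<bar>e k s - e 0 s\<bar> / S k" using Spos by simp
    also have "\<dots> \<le> 2 * E * (1 - p k) / S k" using Spos c2[of k s] by (simp add: divide_right_mono)
    also have "\<dots> = 2 * (1 - p k) / S k * E" by simp
    finally show "\<bar>(V k s - V 0 s) / S k - gstar s\<bar> \<le> 2 * (1 - p k) / S k * E" by simp
  qed
qed

end
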